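(* Let $n\ge 3$, let $F$ be a set of edges of $Q_n$, and let $T$ be a proper subset of the vertex set of $Q_n$ with $|T|\ge 3$ and $|T|_0\ge|T|_1$, such that every edge of $Q_n$ joining a vertex of parity 0 in $T$ to a vertex outside $T$ belongs to $F$. If the subgraph of $Q_n$ induced by $T$ has a vertex of degree 1, then either $F$ is not minimal, or there is a proper subset $T'\subsetneq T$ which is disconnected halfway with respect to the same set $F$.
   Context: $Q_n$ is the $n$-dimensional hypercube on the binary strings of length $n$, two strings adjacent iff they differ in exactly one bit. The parity of a vertex is the number of ones in its label modulo 2. For a set $T$ of vertices, $|T|_0$ and $|T|_1$ denote the numbers of vertices of parity 0 and parity 1 in $T$. $F$ is a set of "faulty" edges; $Q_n-F$ is the graph with all vertices of $Q_n$ and the edges of $Q_n$ not in $F$. "$F$ is not minimal" means that there is a proper subset $F'\subsetneq F$ such that $Q_n-F'$ has no Hamiltonian cycle. A nonempty proper subset $T$ of the vertices of $Q_n$ is disconnected halfway (with respect to $F$) if either (1) $|T|_0\ge |T|_1$ and every edge joining a vertex of parity 0 in $T$ to a vertex outside $T$ is in $F$, or (2) $|T|_1\ge |T|_0$ and every edge joining a vertex of parity 1 in $T$ to a vertex outside $T$ is in $F$. *)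

theory Defs
  imports Main
begin

definition hvert :: "nat \<Rightarrow> bool list set" where
  "hvert n = {xs. length xs = n}"

definition hadj :: "bool list \<Rightarrow> bool list \<Rightarrow> bool" where
  "hadj u v \<longleftrightarrow> length u = length v \<and> card {i. i < length u \<and> u ! i \<noteq> v ! i} = 1"

definition hedges :: "nat \<Rightarrow> bool list set set" where
  "hedges n = {{u, v} | u v. u \<in> hvert n \<and> v \<in> hvert n \<and> hadj u v}"

definition parity :: "bool list \<Rightarrow> nat" where
  "parity v = count_list v True mod 2"

definition card0 :: "bool list set \<Rightarrow> nat" where
  "card0 T = card {v \<in> T. parity v = 0}"

definition card1 :: "bool list set \<Rightarrow> nat" where
  "card1 T = card {v \<in> T. parity v = 1}"

definition ham_cycle :: "nat \<Rightarrow> bool list set set \<Rightarrow> bool list list \<Rightarrow> bool" where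
  "ham_cycle n F cs \<longleftrightarrow> distinct cs \<and> set cs = hvert n \<and> length cs \<ge> 3 \<and>
     (\<forall>i < length cs. hadj (cs ! i) (cs ! ((i + 1) mod length cs)) \<and>
                      {cs ! i, cs ! ((i + 1) mod length cs)} \<notin> F)"

definition has_ham_cycle :: "nat \<Rightarrow> bool list set set \<Rightarrow> bool" where
  "has_ham_cycle n F \<longleftrightarrow> (\<exists>cs. ham_cycle n F cs)"

definition not_minimal :: "nat \<Rightarrow> bool list set set \<Rightarrow> bool" where
  "not_minimal n F \<longleftrightarrow> (\<exists>F'. F' \<subset> F \<and> \<not> has_ham_cycle n F')"

definition disc_halfway :: "nat \<Rightarrow> bool list set set \<Rightarrow> bool list set \<Rightarrow> bool" where
  "disc_halfway n F T \<longleftrightarrow> T \<noteq> {} \<and> T \<subset> hvert n \<and>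
     ((card0 T \<ge> card1 T \<and>
        (\<forall>u v. u \<in> T \<and> parity u = 0 \<and> v \<in> hvert n - T \<and> hadj u v \<longrightarrow> {u, v} \<in> F)) \<or>
      (card1 T \<ge> card0 T \<and>
        (\<forall>u v. u \<in> T \<and> parity u = 1 \<and> v \<in> hvert n - T \<and> hadj u v \<longrightarrow> {u, v} \<in> F)))"

end

theory Submission
  imports Defs
begin

lemma hadj_update:
  assumes "hadj u v"
  shows "\<exists>i<length u. v = u[i := \<not> u!i]"
proof -
  have L: "length u = length v" and C: "card {i. i < length u \<and> u ! i \<noteq> v ! i} = 1"
    using assms unfolding hadj_def by auto
  from card_1_singletonE[OF C] obtain i where I: "{i. i < length u \<and> u ! i \<noteq> v ! i} = {i}"
    by blast
  have il: "i < length u" using I by auto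
  have "v = u[i := \<not> u!i]"
  proof (rule nth_equalityI)
    show "length v = length (u[i := \<not> u ! i])" using L by simp
    fix j assume "j < length v"
    then show "v ! j = u[i := \<not> u ! i] ! j"
      using I L il by (cases "j = i") (auto simp: nth_list_update)
  qed
  then show ?thesis using il by blast
qed

lemma count_flip:
  assumes "i < length u"
  shows "count_list (u[i := \<not> u!i]) True = Suc (count_list u True)
     \<or> count_list u True = Suc (count_list (u[i := \<not> u!i]) True)"
proof -
  have a: "u = take i u @ u!i # drop (Suc i) u" using assms by (simp add: id_take_nth_drop)
  have b: "u[i := \<not> u!i] = take i u @ (\<not> u!i) # drop (Suc i) u"
    using assms by (simp add: upd_conv_take_nth_drop)
  have ca: "count_list u True = count_list (take i u) True + (if u!i then 1 else 0) + count_list (drop (Suc i) u) True"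
    using arg_cong[OF a, of "\<lambda>xs. count_list xs True"] by simp
  have cb: "count_list (u[i := \<not> u!i]) True = count_list (take i u) True + (if u!i then 0 else 1) + count_list (drop (Suc i) u) True"
    using arg_cong[OF b, of "\<lambda>xs. count_list xs True"] by simp
  show ?thesis using ca cb by (cases "u!i") simp_all
qed

lemma hadj_parity:
  assumes "hadj u v"
  shows "parity u \<noteq> parity v"
proof -
  obtain i where i: "i < length u" "v = u[i := \<not> u!i]" using hadj_update[OF assms] by blast
  have "count_list v True = Suc (count_list u True) \<or> count_list u True = Suc (count_list v True)"
    using count_flip[OF i(1)] i(2) by simp
  then show ?thesis unfolding parity_def by presburger
qed

lemma hadj_sym: "hadj u v \<Longrightarrow> hadj v u"
  unfolding hadj_def by (auto simp: eq_commute)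

lemma hadj_irrefl: "\<not> hadj u u"
  unfolding hadj_def by simp

lemma parity_cases: "parity u = 0 \<or> parity u = 1"
  unfolding parity_def by auto

theorem lemma4:
  fixes n :: nat and F :: "bool list set set" and T :: "bool list set"
  assumes "n \<ge> 3"
    and "F \<subseteq> hedges n"
    and "T \<subset> hvert n"
    and "card T \<ge> 3"
    and "card0 T \<ge> card1 T"
    and "\<forall>u v. u \<in> T \<and> parity u = 0 \<and> v \<in> hvert n - T \<and> hadj u v \<longrightarrow> {u, v} \<in> F"
    and "\<exists>v \<in> T. card {w \<in> T. hadj v w} = 1"
  shows "not_minimal n F \<or> (\<exists>T'. T' \<subset> T \<and> disc_halfway n F T')"
proof -
  have finH: "finite (hvert n)" unfolding hvert_def by (rule finite_list_length)
  have finT: "finite T" using assms(3) finH finite_subset by blast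
  obtain v where vT: "v \<in> T" and c: "card {w \<in> T. hadj v w} = 1" using assms(7) by blast
  from card_1_singletonE[OF c] obtain w where W: "{x \<in> T. hadj v x} = {w}" by blast
  have wT: "w \<in> T" and vw: "hadj v w" using W by auto
  have vnw: "v \<noteq> w" using vw hadj_irrefl by metis
  have pvw: "parity v \<noteq> parity w" using hadj_parity[OF vw] .
  have nbr: "\<And>x. x \<in> T \<Longrightarrow> hadj v x \<Longrightarrow> x = w" using W by auto
  show ?thesis
  proof (cases "parity v = 0")
    case True
    hence pw: "parity w = 1" using pvw parity_cases by metis
    let ?T = "{v, w}"
    have sub: "?T \<subset> T"
    proof -
      have "card ?T = 2" using vnw by simp
      then have "?T \<noteq> T" using assms(4) by auto
      then show ?thesis using vT wT by auto
    qed
    have "{x \<in> ?T. parity x = 0} = {v}" using True pw by auto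
    then have c0: "card0 ?T = 1" unfolding card0_def by simp
    have "{x \<in> ?T. parity x = 1} = {w}" using True pw by auto
    then have c1: "card1 ?T = 1" unfolding card1_def by simp
    have "disc_halfway n F ?T"
      unfolding disc_halfway_def
    proof (intro conjI disjI1)
      show "?T \<subset> hvert n" using sub assms(3) by blast
      show "card1 ?T \<le> card0 ?T" using c0 c1 by simp
      show "\<forall>u x. u \<in> ?T \<and> parity u = 0 \<and> x \<in> hvert n - ?T \<and> hadj u x \<longrightarrow> {u, x} \<in> F"
      proof (intro allI impI)
        fix u x assume h: "u \<in> ?T \<and> parity u = 0 \<and> x \<in> hvert n - ?T \<and> hadj u x"
        then have "u = v" using pw by auto
        moreover have "x \<notin> T" using h nbr \<open>u = v\<close> by auto
        ultimately show "{u, x} \<in> F" using h assms(6) True vT by auto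
      qed
    qed simp
    then show ?thesis using sub by blast
  next
    case False
    hence pv: "parity v = 1" using parity_cases by metis
    hence pw: "parity w = 0" using pvw parity_cases by metis
    let ?T = "T - {v, w}"
    have sub: "?T \<subset> T" using vT by auto
    have ne: "?T \<noteq> {}"
    proof
      assume "?T = {}"
      then have "T \<subseteq> {v, w}" by auto
      then have "card T \<le> card {v, w}" by (simp add: card_mono)
      also have "\<dots> \<le> 2" by (simp add: card_insert_le_m1)
      finally show False using assms(4) by simp
    qed
    have e0: "{x \<in> ?T. parity x = 0} = {x \<in> T. parity x = 0} - {w}" using pv by auto
    have e1: "{x \<in> ?T. parity x = 1} = {x \<in> T. parity x = 1} - {v}" using pw by auto
    have c0: "card0 ?T = card0 T - 1" unfolding card0_def e0
      using finT wT pw by (simp add: card_Diff_singleton)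
    have c1: "card1 ?T = card1 T - 1" unfolding card1_def e1
      using finT vT pv by (simp add: card_Diff_singleton)
    have "disc_halfway n F ?T"
      unfolding disc_halfway_def
    proof (intro conjI disjI1)
      show "?T \<noteq> {}" by fact
      show "?T \<subset> hvert n" using sub assms(3) by blast
      show "card1 ?T \<le> card0 ?T" using c0 c1 assms(5) by simp
      show "\<forall>u x. u \<in> ?T \<and> parity u = 0 \<and> x \<in> hvert n - ?T \<and> hadj u x \<longrightarrow> {u, x} \<in> F"
      proof (intro allI impI)
        fix u x assume h: "u \<in> ?T \<and> parity u = 0 \<and> x \<in> hvert n - ?T \<and> hadj u x"
        have "x \<noteq> v"
        proof
          assume "x = v"
          then have "hadj v u" using h hadj_sym by blast
          then have "u = w" using nbr h by auto
          then show False using h by auto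
        qed
        moreover have "x \<noteq> w" using h pw hadj_parity by fastforce
        ultimately have "x \<notin> T" using h by auto
        then show "{u, x} \<in> F" using h assms(6) by auto
      qed
    qed
    then show ?thesis using sub by blast
  qed
qed

end
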